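(* Consider the difference equation $x_k+a_1x_{k-1}+\dots+a_nx_{k-n}=0$, $k\ge n$, with $a_i\in\mathbb R$. There exists an initial condition $x^{(0)}=(x_0,\dots,x_{n-1})$ with $\|x^{(0)}\|_\infty=1$ whose solution satisfies $\max_{k\ge n}|x_k|>1$ if and only if $\sum_{i=1}^n|a_i|>1$. *)

theory Defs
  imports "HOL-Analysis.Analysis"
begin

definition solves_diff_eq :: "nat \<Rightarrow> (nat \<Rightarrow> real) \<Rightarrow> (nat \<Rightarrow> real) \<Rightarrow> bool" where
  "solves_diff_eq n a x \<longleftrightarrow> (\<forall>k\<ge>n. x k + (\<Sum>i=1..n. a i * x (k - i)) = 0)"

definition init_norm :: "nat \<Rightarrow> (nat \<Rightarrow> real) \<Rightarrow> real" where
  "init_norm n x = Max ((\<lambda>i. \<bar>x i\<bar>) ` {0..<n})"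

end

theory Submission
  imports Defs
begin

function sol :: "nat \<Rightarrow> (nat\<Rightarrow>real) \<Rightarrow> (nat\<Rightarrow>real) \<Rightarrow> nat \<Rightarrow> real" where
  "sol n a x0 k = (if k < n then x0 k else - (\<Sum>i=1..n. a i * sol n a x0 (k-i)))"
  by auto
termination
  by (relation "Wellfounded.measure (\<lambda>(n,a,x0,k). k)") auto

declare sol.simps[simp del]

lemma sol_solves: "solves_diff_eq n a (sol n a x0)"
  unfolding solves_diff_eq_def
proof (intro allI impI)
  fix k assume "n \<le> k"
  then show "sol n a x0 k + (\<Sum>i=1..n. a i * sol n a x0 (k - i)) = 0"
    by (subst sol.simps) simp
qed

lemma bounded:
  assumes s: "solves_diff_eq n a x" and b: "\<And>j. j < n \<Longrightarrow> \<bar>x j\<bar> \<le> 1"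
    and S: "(\<Sum>i=1..n. \<bar>a i\<bar>) \<le> 1"
  shows "\<bar>x k\<bar> \<le> 1"
proof (induction k rule: less_induct)
  case (less k)
  show ?case
  proof (cases "k < n")
    case True then show ?thesis using b by simp
  next
    case False
    then have "x k = - (\<Sum>i=1..n. a i * x (k - i))"
      using s unfolding solves_diff_eq_def by (simp add: eq_neg_iff_add_eq_0)
    then have "\<bar>x k\<bar> \<le> (\<Sum>i=1..n. \<bar>a i * x (k - i)\<bar>)"
      by (simp add: sum_abs)
    also have "\<dots> \<le> (\<Sum>i=1..n. \<bar>a i\<bar>)"
    proof (rule sum_mono)
      fix i assume "i \<in> {1..n}"
      then have "k - i < k" using False by auto
      then have "\<bar>x (k-i)\<bar> \<le> 1" using less by blast
      then show "\<bar>a i * x (k - i)\<bar> \<le> \<bar>a i\<bar>"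
        by (simp add: abs_mult mult_left_le)
    qed
    finally show ?thesis using S by linarith
  qed
qed

theorem mainTheorem7:
  fixes n :: nat and a :: "nat \<Rightarrow> real"
  assumes "n \<ge> 1"
  shows "(\<exists>x. solves_diff_eq n a x \<and> init_norm n x = 1 \<and> (\<exists>k\<ge>n. \<bar>x k\<bar> > 1))
         \<longleftrightarrow> (\<Sum>i=1..n. \<bar>a i\<bar>) > 1"
proof
  assume "\<exists>x. solves_diff_eq n a x \<and> init_norm n x = 1 \<and> (\<exists>k\<ge>n. \<bar>x k\<bar> > 1)"
  then obtain x k where s: "solves_diff_eq n a x" and N: "init_norm n x = 1" and k: "\<bar>x k\<bar> > 1"
    by blast
  have b: "\<bar>x j\<bar> \<le> 1" if "j < n" for j
  proof -
    have "\<bar>x j\<bar> \<le> Max ((\<lambda>i. \<bar>x i\<bar>) ` {0..<n})"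
      by (rule Max_ge) (use that in auto)
    then show ?thesis using N unfolding init_norm_def by simp
  qed
  show "(\<Sum>i=1..n. \<bar>a i\<bar>) > 1"
  proof (rule ccontr)
    assume "\<not> ?thesis"
    then have "\<bar>x k\<bar> \<le> 1" using bounded[OF s b] by force
    then show False using k by simp
  qed
next
  assume S: "(\<Sum>i=1..n. \<bar>a i\<bar>) > 1"
  define x0 where "x0 = (\<lambda>j. if a (n - j) \<ge> 0 then -1 else (1::real))"
  define x where "x = sol n a x0"
  have s: "solves_diff_eq n a x" unfolding x_def by (rule sol_solves)
  have img: "(\<lambda>i. \<bar>x i\<bar>) ` {0..<n} = {1}"
  proof -
    have "\<And>i. i < n \<Longrightarrow> \<bar>x i\<bar> = 1"
      unfolding x_def x0_def by (subst sol.simps) simp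
    then show ?thesis using assms by (auto simp: image_iff intro!: exI[of _ 0])
  qed
  have N: "init_norm n x = 1" unfolding init_norm_def img by simp
  have "x n = - (\<Sum>i=1..n. a i * x (n - i))"
    using s unfolding solves_diff_eq_def by (simp add: eq_neg_iff_add_eq_0)
  also have "\<dots> = (\<Sum>i=1..n. \<bar>a i\<bar>)"
    unfolding sum_negf[symmetric]
  proof (rule sum.cong)
    fix i assume i: "i \<in> {1..n}"
    then have "x (n - i) = x0 (n - i)" unfolding x_def by (subst sol.simps) auto
    moreover have "n - (n - i) = i" using i by auto
    ultimately show "- (a i * x (n - i)) = \<bar>a i\<bar>" unfolding x0_def by auto
  qed simp
  finally have "\<bar>x n\<bar> > 1" using S by simp
  then show "\<exists>x. solves_diff_eq n a x \<and> init_norm n x = 1 \<and> (\<exists>k\<ge>n. \<bar>x k\<bar> > 1)"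
    using s N by blast
qed

end
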